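(* Let $H$ be an admissible Hamiltonian with vector field $f$ and Hessian $\mathcal H$, and let $g=J\nabla K$ be associated to $f$ via $B$, with $\mathcal K=\nabla^2K=B\mathcal H$. Then for all $x$: $$g'(x)g(x)=f'(x)f(x),\qquad (g'(x))^2=(f'(x))^2,$$ $$J(x)\mathcal H\,J(x)\mathcal K=J(x)\mathcal K\,J(x)\mathcal H,\qquad (J(x)\mathcal H)^2=(J(x)\mathcal K)^2,\qquad (\mathcal HJ(x))^2=(\mathcal KJ(x))^2.$$
   Context: Fix an integer $n\ge 2$. Points of $\mathbb R^{2n}$ are $x=(x_1,\dots,x_{2n})^{T}$; write $u=(x_1,\dots,x_n)^T$. Let $X(u)$ be the $n\times n$ matrix with entries $X(u)_{ij}=x_{k}$ where $k\in\{1,\dots,n\}$, $k\equiv i+j-1 \pmod n$, and let $J(x)=\begin{pmatrix}0&X(u)\\-X(u)&0\end{pmatrix}$. Let $\mathcal P$ be the $n\times n$ cyclic shift matrix ($\mathcal P_{i,i+1}=1$ for $1\le i\le n-1$, $\mathcal P_{n,1}=1$, all other entries $0$) and $A=\begin{pmatrix}\mathcal P&0\\0&\mathcal P\end{pmatrix}$. An admissible Hamiltonian is a homogeneous quadratic form $H(x)=\tfrac12 x^T\mathcal H x$ with a constant symmetric matrix $\mathcal H=\nabla^2H$ satisfying $A\mathcal H=\mathcal H A^T$; its Hamiltonian vector field is $f(x)=J(x)\nabla H(x)$ and $f'(x)$ denotes the Jacobi matrix of $f$. Associated vector fields: let $B=\sum_{i=0}^{n-1}\alpha_iA^i$ with $\alpha_i\in\mathbb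 C$ and $B^2=I$. If $H$ is an admissible Hamiltonian with vector field $f$, put $K(x)=\tfrac12 x^T B\mathcal H x$ (so $\nabla K=B\nabla H$) and $g(x)=J(x)\nabla K(x)=B^Tf(x)$; $g$ is said to be associated to $f$ via $B$. *)

theory Defs
  imports "HOL-Analysis.Analysis" "Jordan_Normal_Form.Matrix"
begin

text \<open>All indices are 0-based (JNF convention): entry (i,j) of the paper is (i-1,j-1) here.\<close>

definition cshift :: "nat \<Rightarrow> 'a::{zero,one} mat" where
  "cshift n = mat n n (\<lambda>(i,j). if j = (i + 1) mod n then 1 else 0)"

definition Amat :: "nat \<Rightarrow> 'a::{zero,one} mat" where
  "Amat n = four_block_mat (cshift n) (0\<^sub>m n n) (0\<^sub>m n n) (cshift n)"

text \<open>X(u)_{ij} = x_k with k = i+j-1 mod n (1-based), i.e. x_{(i+j) mod n} 0-based.\<close>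
definition Xmat :: "nat \<Rightarrow> 'a vec \<Rightarrow> 'a mat" where
  "Xmat n x = mat n n (\<lambda>(i,j). x $ ((i + j) mod n))"

definition Jmat :: "nat \<Rightarrow> 'a::{zero,uminus} vec \<Rightarrow> 'a mat" where
  "Jmat n x = four_block_mat (0\<^sub>m n n) (Xmat n x) (map_mat uminus (Xmat n x)) (0\<^sub>m n n)"

definition admissible :: "nat \<Rightarrow> real mat \<Rightarrow> bool" where
  "admissible n HH \<longleftrightarrow> HH \<in> carrier_mat (2*n) (2*n) \<and> transpose_mat HH = HH \<and>
     Amat n * HH = HH * transpose_mat (Amat n)"

definition Bmat :: "nat \<Rightarrow> (nat \<Rightarrow> complex) \<Rightarrow> complex mat" where
  "Bmat n \<alpha> = mat (2*n) (2*n) (\<lambda>(i,j). \<Sum>k<n. \<alpha> k * (Amat n ^\<^sub>m k) $$ (i,j))"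

definition cvec :: "real vec \<Rightarrow> complex vec" where
  "cvec x = map_vec complex_of_real x"

definition cmat :: "real mat \<Rightarrow> complex mat" where
  "cmat M = map_mat complex_of_real M"

text \<open>Vector field J(x) * (M x) where M x is the gradient of the quadratic form (1/2) x^T M x.\<close>
definition hamvf :: "nat \<Rightarrow> complex mat \<Rightarrow> real vec \<Rightarrow> complex vec" where
  "hamvf n M x = Jmat n (cvec x) *\<^sub>v (M *\<^sub>v cvec x)"

definition jacobian :: "nat \<Rightarrow> (real vec \<Rightarrow> complex vec) \<Rightarrow> real vec \<Rightarrow> complex mat" where
  "jacobian m F x = mat m m (\<lambda>(i,j).
     vector_derivative (\<lambda>t::real. F (x + t \<cdot>\<^sub>v unit_vec m j) $ i) (at 0))"

end

theory Submission
  imports Defs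
begin

lemma cmat_dims: "dim_row (cmat A) = dim_row A" "dim_col (cmat A) = dim_col A"
  unfolding cmat_def by simp_all
lemma cmat_carrier: "cmat A \<in> carrier_mat r c \<longleftrightarrow> A \<in> carrier_mat r c"
  unfolding carrier_mat_def mem_Collect_eq cmat_dims ..

lemma cmat_mult:
  assumes A: "A \<in> carrier_mat a b" and B: "B \<in> carrier_mat b c"
  shows "cmat (A * B) = cmat A * cmat B"
  unfolding cmat_def by (rule of_real_hom.mat_hom_mult[OF A B])

lemma cmat_transpose: "cmat (transpose_mat A) = transpose_mat (cmat A)"
proof (rule eq_matI)
  fix i j assume "i < dim_row (transpose_mat (cmat A))" "j < dim_col (transpose_mat (cmat A))"
  thus "cmat (transpose_mat A) $$ (i,j) = transpose_mat (cmat A) $$ (i,j)" by (simp add: cmat_def)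
qed (simp_all add: cmat_def)

lemma cmat_four: "A \<in> carrier_mat n n \<Longrightarrow> B \<in> carrier_mat n n \<Longrightarrow> C \<in> carrier_mat n n \<Longrightarrow> D \<in> carrier_mat n n \<Longrightarrow> cmat (four_block_mat A B C D) = four_block_mat (cmat A) (cmat B) (cmat C) (cmat D)"
  by (rule eq_matI) (auto simp: cmat_def)


definition Hank :: "nat \<Rightarrow> (nat \<Rightarrow> 'a) \<Rightarrow> 'a mat" where
  "Hank n h = mat n n (\<lambda>(i,j). h ((i+j) mod n))"

lemma Hank_carrier[simp]: "Hank n h \<in> carrier_mat n n" by (simp add: Hank_def)
lemma cshift_carrier[simp]: "cshift n \<in> carrier_mat n n" by (simp add: cshift_def)
lemma Amat_carrier[simp]: "Amat n \<in> carrier_mat (2*n) (2*n)"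
  unfolding Amat_def mult_2 by (rule four_block_carrier_mat) auto
lemma Amat_dims[simp]: "dim_row (Amat n) = 2*n" "dim_col (Amat n) = 2*n"
  using Amat_carrier[of n] by (auto simp del: Amat_carrier)
lemma cshift_dims[simp]: "dim_row (cshift n) = n" "dim_col (cshift n) = n"
  by (auto simp: cshift_def)
lemma Hank_dims[simp]: "dim_row (Hank n h) = n" "dim_col (Hank n h) = n"
  by (auto simp: Hank_def)
lemma Xmat_carrier[simp]: "Xmat n v \<in> carrier_mat n n" by (simp add: Xmat_def)
lemma Jmat_carrier[simp]: "Jmat n v \<in> carrier_mat (2*n) (2*n)"
  unfolding Jmat_def mult_2 by (rule four_block_carrier_mat) auto

lemma Jmat_dims[simp]: "dim_row (Jmat n v) = 2*n" "dim_col (Jmat n v) = 2*n"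
  using Jmat_carrier[of n v] by (auto simp del: Jmat_carrier)

lemma Xmat_Hank: "Xmat n v = Hank n (\<lambda>k. v $ k)" by (simp add: Xmat_def Hank_def)
lemma uminus_Hank: "map_mat uminus (Hank n h) = Hank n (\<lambda>k. - h k)"
  by (rule eq_matI) (auto simp: Hank_def)
lemma Hank_cong: "(\<And>k. k < n \<Longrightarrow> h k = h' k) \<Longrightarrow> Hank n h = Hank n h'"
  by (rule eq_matI) (auto simp: Hank_def)

lemma mod_pred_iff: assumes "0 < (n::nat)" "k < n" "j < n" shows "(j = (k+1) mod n) = (k = (j+n-1) mod n)"
proof (cases "j = 0")
  case True
  then show ?thesis using assms
    by (cases "k + 1 = n") (auto simp: mod_if)
next
  case False
  then have "(j+n-1) mod n = j - 1" using assms by (simp add: mod_if)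
  then show ?thesis using assms False by (auto simp: mod_if)
qed

lemma shift_mod: "0 < (n::nat) \<Longrightarrow> (a + n - 1) mod n = (a mod n + n - 1) mod n"
proof -
  assume n: "0 < n"
  have "(a mod n + (n - 1)) mod n = (a + (n - 1)) mod n" by (rule mod_add_left_eq)
  moreover have "a + n - 1 = a + (n-1)" "a mod n + n - 1 = a mod n + (n-1)" using n by auto
  ultimately show ?thesis by simp
qed

lemma Hank_shift_right:
  assumes n: "0 < n"
  shows "Hank n h * (cshift n :: 'a::comm_ring_1 mat) = Hank n (\<lambda>k. h ((k+n-1) mod n))"
proof (rule eq_matI)
  fix i j assume i: "i < dim_row (Hank n (\<lambda>k. h ((k+n-1) mod n)))" and j: "j < dim_col (Hank n (\<lambda>k. h ((k+n-1) mod n)))"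
  hence i: "i < n" and j: "j < n" by (auto simp: Hank_def)
  have "(Hank n h * cshift n) $$ (i,j) = (\<Sum>k<n. h ((i+k) mod n) * (if j = (k+1) mod n then 1 else 0))"
    using i j by (simp add: Hank_def cshift_def scalar_prod_def lessThan_atLeast0)
  also have "\<dots> = (\<Sum>k<n. if k = (j+n-1) mod n then h ((i+k) mod n) else 0)"
    by (rule sum.cong, simp, use mod_pred_iff[OF n] j in auto)
  also have "\<dots> = h ((i + (j+n-1) mod n) mod n)" using n by simp
  also have "(i + (j+n-1) mod n) mod n = (i + (j + n - 1)) mod n" by (rule mod_add_right_eq)
  also have "i + (j + n - 1) = (i+j) + n - 1" using n by simp
  also have "((i+j) + n - 1) mod n = ((i+j) mod n + n - 1) mod n" using n by (rule shift_mod)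
  finally show "(Hank n h * cshift n) $$ (i,j) = Hank n (\<lambda>k. h ((k+n-1) mod n)) $$ (i,j)"
    using i j by (simp add: Hank_def)
qed (auto simp: Hank_def cshift_def)

lemma Hank_shift_left:
  assumes n: "0 < n"
  shows "transpose_mat (cshift n :: 'a::comm_ring_1 mat) * Hank n h = Hank n (\<lambda>k. h ((k+n-1) mod n))"
proof (rule eq_matI)
  fix i j assume i: "i < dim_row (Hank n (\<lambda>k. h ((k+n-1) mod n)))" and j: "j < dim_col (Hank n (\<lambda>k. h ((k+n-1) mod n)))"
  hence i: "i < n" and j: "j < n" by (auto simp: Hank_def)
  have "(transpose_mat (cshift n) * Hank n h) $$ (i,j) = (\<Sum>k<n. (if i = (k+1) mod n then 1 else 0) * h ((k+j) mod n))"
    using i j by (simp add: Hank_def cshift_def scalar_prod_def lessThan_atLeast0)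
  also have "\<dots> = (\<Sum>k<n. if k = (i+n-1) mod n then h ((k+j) mod n) else 0)"
    by (rule sum.cong, simp, use mod_pred_iff[OF n] i in auto)
  also have "\<dots> = h (((i+n-1) mod n + j) mod n)" using n by simp
  also have "((i+n-1) mod n + j) mod n = (i + n - 1 + j) mod n" by (simp add: mod_add_left_eq)
  also have "i + n - 1 + j = (i+j) + n - 1" using n by simp
  also have "((i+j) + n - 1) mod n = ((i+j) mod n + n - 1) mod n" using n by (rule shift_mod)
  finally show "(transpose_mat (cshift n) * Hank n h) $$ (i,j) = Hank n (\<lambda>k. h ((k+n-1) mod n)) $$ (i,j)"
    using i j by (simp add: Hank_def)
qed (auto simp: Hank_def cshift_def)

lemma Jmat_Hank: "Jmat n v = four_block_mat (0\<^sub>m n n) (Hank n (\<lambda>k. v$k)) (Hank n (\<lambda>k. - v$k)) (0\<^sub>m n n)"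
  unfolding Jmat_def Xmat_Hank uminus_Hank ..


lemma HP_carrier[simp]: "Hank n h * cshift n \<in> carrier_mat n n" "transpose_mat (cshift n) * Hank n h \<in> carrier_mat n n"
  by (auto intro!: mult_carrier_mat)

lemma AT_four: "transpose_mat (Amat n) = four_block_mat (transpose_mat (cshift n)) (0\<^sub>m n n) (0\<^sub>m n n) (transpose_mat (cshift n))"
  unfolding Amat_def by (subst transpose_four_block_mat[where ?nr1.0=n and ?nc1.0=n and ?nr2.0=n and ?nc2.0=n]) simp_all

lemma E1:
  assumes n: "0 < n"
  shows "Jmat n (v :: 'a::comm_ring_1 vec) * Amat n = transpose_mat (Amat n) * Jmat n v"
proof -
  have "Jmat n v * Amat n = four_block_mat (0\<^sub>m n n * cshift n + Hank n (\<lambda>k. v$k) * 0\<^sub>m n n) (0\<^sub>m n n * 0\<^sub>m n n + Hank n (\<lambda>k. v$k) * cshift n)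
     (Hank n (\<lambda>k. - v$k) * cshift n + 0\<^sub>m n n * 0\<^sub>m n n) (Hank n (\<lambda>k. - v$k) * 0\<^sub>m n n + 0\<^sub>m n n * cshift n)"
    unfolding Jmat_Hank Amat_def
    by (rule mult_four_block_mat[where ?nr1.0=n and ?n1.0=n and ?n2.0=n and ?nr2.0=n and ?nc1.0=n and ?nc2.0=n]) simp_all
  also have "\<dots> = four_block_mat (0\<^sub>m n n) (Hank n (\<lambda>k. v$k) * cshift n) (Hank n (\<lambda>k. - v$k) * cshift n) (0\<^sub>m n n)"
    by simp
  also have "\<dots> = four_block_mat (0\<^sub>m n n) (transpose_mat (cshift n) * Hank n (\<lambda>k. v$k)) (transpose_mat (cshift n) * Hank n (\<lambda>k. - v$k)) (0\<^sub>m n n)"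
    using n by (simp only: Hank_shift_left Hank_shift_right)
  also have "\<dots> = four_block_mat (transpose_mat (cshift n) * 0\<^sub>m n n + 0\<^sub>m n n * Hank n (\<lambda>k. - v$k)) (transpose_mat (cshift n) * Hank n (\<lambda>k. v$k) + 0\<^sub>m n n * 0\<^sub>m n n)
     (0\<^sub>m n n * 0\<^sub>m n n + transpose_mat (cshift n) * Hank n (\<lambda>k. - v$k)) (0\<^sub>m n n * Hank n (\<lambda>k. v$k) + transpose_mat (cshift n) * 0\<^sub>m n n)"
    by simp
  also have "\<dots> = transpose_mat (Amat n) * Jmat n v"
    unfolding Jmat_Hank AT_four
    by (rule mult_four_block_mat[where ?nr1.0=n and ?n1.0=n and ?n2.0=n and ?nr2.0=n and ?nc1.0=n and ?nc2.0=n, symmetric]) simp_all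
  finally show ?thesis .
qed

lemma Amat_col_lo:
  assumes "l < 2*n" "k < n"
  shows "(Amat n :: 'a::comm_ring_1 mat) $$ (l,k) = (if l < n \<and> k = (l+1) mod n then 1 else 0)"
  using assms by (simp add: Amat_def cshift_def mult_2)

lemma AT_vec:
  assumes n: "0 < n" and v: "v \<in> carrier_vec (2*n)" and k: "k < n"
  shows "(transpose_mat (Amat n) *\<^sub>v (v :: 'a::comm_ring_1 vec)) $ k = v $ ((k+n-1) mod n)"
proof -
  have k2: "k < 2*n" using k by simp
  have p: "(k+n-1) mod n < 2*n" using mod_less_divisor[OF n, of "k+n-1"] by simp
  have "(transpose_mat (Amat n) *\<^sub>v v) $ k = row (transpose_mat (Amat n)) k \<bullet> v"
    using k2 by simp
  also have "\<dots> = (\<Sum>l\<in>{0..<2*n}. row (transpose_mat (Amat n)) k $ l * v $ l)"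
    using v unfolding scalar_prod_def by simp
  also have "\<dots> = (\<Sum>l\<in>{0..<2*n}. if l = (k+n-1) mod n then v $ l else 0)"
  proof (rule sum.cong[OF refl])
    fix l assume "l \<in> {0..<2*n}"
    hence l: "l < 2*n" by simp
    have "row (transpose_mat (Amat n)) k $ l = (Amat n :: 'a mat) $$ (l,k)" using l k2 by simp
    thus "row (transpose_mat (Amat n)) k $ l * v $ l = (if l = (k+n-1) mod n then v $ l else 0)"
      using Amat_col_lo[OF l k, where 'a='a] mod_pred_iff[OF n _ k, of l] mod_less_divisor[OF n, of "k+n-1"] by auto
  qed
  also have "\<dots> = v $ ((k+n-1) mod n)" using p by (simp add: sum.delta')
  finally show ?thesis .
qed

lemma E3:
  assumes n: "0 < n" and v: "v \<in> carrier_vec (2*n)"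
  shows "Jmat n (transpose_mat (Amat n) *\<^sub>v (v :: 'a::comm_ring_1 vec)) = transpose_mat (Amat n) * Jmat n v"
proof -
  have "transpose_mat (Amat n) * Jmat n v = four_block_mat (transpose_mat (cshift n) * 0\<^sub>m n n + 0\<^sub>m n n * Hank n (\<lambda>k. - v$k)) (transpose_mat (cshift n) * Hank n (\<lambda>k. v$k) + 0\<^sub>m n n * 0\<^sub>m n n)
     (0\<^sub>m n n * 0\<^sub>m n n + transpose_mat (cshift n) * Hank n (\<lambda>k. - v$k)) (0\<^sub>m n n * Hank n (\<lambda>k. v$k) + transpose_mat (cshift n) * 0\<^sub>m n n)"
    unfolding Jmat_Hank AT_four
    by (rule mult_four_block_mat[where ?nr1.0=n and ?n1.0=n and ?n2.0=n and ?nr2.0=n and ?nc1.0=n and ?nc2.0=n]) simp_all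
  also have "\<dots> = four_block_mat (0\<^sub>m n n) (transpose_mat (cshift n) * Hank n (\<lambda>k. v$k)) (transpose_mat (cshift n) * Hank n (\<lambda>k. - v$k)) (0\<^sub>m n n)"
    by simp
  also have "\<dots> = four_block_mat (0\<^sub>m n n) (Hank n (\<lambda>k. v $ ((k+n-1) mod n))) (Hank n (\<lambda>k. - v $ ((k+n-1) mod n))) (0\<^sub>m n n)"
    using n by (simp only: Hank_shift_left)
  also have "\<dots> = Jmat n (transpose_mat (Amat n) *\<^sub>v v)"
    unfolding Jmat_Hank using AT_vec[OF n v]
    by (intro cong_four_block_mat refl Hank_cong) auto
  finally show ?thesis by simp
qed

lemma Jentry:
  assumes "i < 2*n" "k < 2*n"
  shows "Jmat n v $$ (i,k) = (if i<n then if k<n then 0 else v$((i+(k-n)) mod n)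
                              else if k<n then - v$((i-n+k) mod n) else 0)"
  using assms by (simp add: Jmat_def Xmat_def mult_2)

lemma Jentry_add:
  assumes "i < 2*n" "k < 2*n" "a \<in> carrier_vec (2*n)" "b \<in> carrier_vec (2*n)"
  shows "Jmat n (a + c \<cdot>\<^sub>v b) $$ (i,k) = Jmat n a $$ (i,k) + c * Jmat n (b::'a::comm_ring_1 vec) $$ (i,k)"
proof -
  have n0: "0 < n" using assms by auto
  have idx: "\<And>p. p < n \<Longrightarrow> (a + c \<cdot>\<^sub>v b) $ p = a$p + c * b$p" using assms by auto
  show ?thesis using assms n0 by (simp add: Jentry idx)
qed

lemma Jmat_add_mult:
  assumes "a \<in> carrier_vec (2*n)" "b \<in> carrier_vec (2*n)" "w \<in> carrier_vec (2*n)"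
  shows "Jmat n (a + c \<cdot>\<^sub>v b) *\<^sub>v w = Jmat n a *\<^sub>v w + c \<cdot>\<^sub>v (Jmat n (b::'a::comm_ring_1 vec) *\<^sub>v w)"
proof (rule eq_vecI)
  fix i assume "i < dim_vec (Jmat n a *\<^sub>v w + c \<cdot>\<^sub>v (Jmat n b *\<^sub>v w))"
  hence i: "i < 2*n" by simp
  have "(Jmat n (a + c \<cdot>\<^sub>v b) *\<^sub>v w) $ i = (\<Sum>k<2*n. (Jmat n a $$ (i,k) + c * Jmat n b $$ (i,k)) * w $ k)"
    using i assms by (simp add: scalar_prod_def lessThan_atLeast0 Jentry_add)
  also have "\<dots> = (\<Sum>k<2*n. Jmat n a $$ (i,k) * w $ k) + c * (\<Sum>k<2*n. Jmat n b $$ (i,k) * w $ k)"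
    by (simp add: algebra_simps sum.distrib sum_distrib_left)
  also have "\<dots> = (Jmat n a *\<^sub>v w + c \<cdot>\<^sub>v (Jmat n b *\<^sub>v w)) $ i"
    using i assms by (simp add: scalar_prod_def lessThan_atLeast0)
  finally show "(Jmat n (a + c \<cdot>\<^sub>v b) *\<^sub>v w) $ i = (Jmat n a *\<^sub>v w + c \<cdot>\<^sub>v (Jmat n b *\<^sub>v w)) $ i" .
qed simp

lemma cvec_line: "x \<in> carrier_vec m \<Longrightarrow> j < m \<Longrightarrow>
  cvec (x + t \<cdot>\<^sub>v unit_vec m j) = cvec x + complex_of_real t \<cdot>\<^sub>v unit_vec m j"
  by (rule eq_vecI) (auto simp: cvec_def)

lemma cvec_carrier[simp]: "x \<in> carrier_vec m \<Longrightarrow> cvec x \<in> carrier_vec m"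
  by (simp add: cvec_def)

lemma hamvf_line:
  assumes x: "x \<in> carrier_vec (2*n)" and M: "Mm \<in> carrier_mat (2*n) (2*n)" and j: "j < 2*n" and i: "i < 2*n"
  defines "a \<equiv> cvec x" and "b \<equiv> unit_vec (2*n) j :: complex vec"
  shows "hamvf n Mm (x + t \<cdot>\<^sub>v unit_vec (2*n) j) $ i =
     (Jmat n a *\<^sub>v (Mm *\<^sub>v a)) $ i + complex_of_real t * ((Jmat n a *\<^sub>v (Mm *\<^sub>v b)) $ i + (Jmat n b *\<^sub>v (Mm *\<^sub>v a)) $ i)
     + (complex_of_real t)^2 * (Jmat n b *\<^sub>v (Mm *\<^sub>v b)) $ i"
proof -
  let ?c = "complex_of_real t"
  have a: "a \<in> carrier_vec (2*n)" and b: "b \<in> carrier_vec (2*n)" using x by (auto simp: a_def b_def)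
  have "hamvf n Mm (x + t \<cdot>\<^sub>v unit_vec (2*n) j) = Jmat n (a + ?c \<cdot>\<^sub>v b) *\<^sub>v (Mm *\<^sub>v a + ?c \<cdot>\<^sub>v (Mm *\<^sub>v b))"
    unfolding hamvf_def cvec_line[OF x j] a_def[symmetric] b_def[symmetric]
    using a b M by (simp add: mult_add_distrib_mat_vec mult_mat_vec)
  also have "\<dots> = Jmat n a *\<^sub>v (Mm *\<^sub>v a + ?c \<cdot>\<^sub>v (Mm *\<^sub>v b)) + ?c \<cdot>\<^sub>v (Jmat n b *\<^sub>v (Mm *\<^sub>v a + ?c \<cdot>\<^sub>v (Mm *\<^sub>v b)))"
    using a b M by (intro Jmat_add_mult) auto
  also have "\<dots> = (Jmat n a *\<^sub>v (Mm *\<^sub>v a) + ?c \<cdot>\<^sub>v (Jmat n a *\<^sub>v (Mm *\<^sub>v b))) + ?c \<cdot>\<^sub>v (Jmat n b *\<^sub>v (Mm *\<^sub>v a) + ?c \<cdot>\<^sub>v (Jmat n b *\<^sub>v (Mm *\<^sub>v b)))"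
    using a b M by (simp add: mult_add_distrib_mat_vec[of _ "2*n" "2*n"] mult_mat_vec[of _ "2*n" "2*n"])
  finally show ?thesis using i a b M by (simp add: algebra_simps power2_eq_square)
qed

definition Mz :: "nat \<Rightarrow> complex vec \<Rightarrow> complex mat" where
  "Mz n z = mat (2*n) (2*n) (\<lambda>(i,j). (Jmat n (unit_vec (2*n) j) *\<^sub>v z) $ i)"

lemma Mz_carrier[simp]: "Mz n z \<in> carrier_mat (2*n) (2*n)" by (simp add: Mz_def)
lemma Mz_dims[simp]: "dim_row (Mz n z) = 2*n" "dim_col (Mz n z) = 2*n" by (simp_all add: Mz_def)

lemma mat_vec_unit: "A \<in> carrier_mat m m \<Longrightarrow> i < m \<Longrightarrow> j < m \<Longrightarrow> (A *\<^sub>v unit_vec m j) $ i = A $$ (i,(j::nat))"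
  for A :: "'a::comm_ring_1 mat"
  by simp

lemma jacobian_hamvf:
  assumes x: "x \<in> carrier_vec (2*n)" and M: "Mm \<in> carrier_mat (2*n) (2*n)"
  shows "jacobian (2*n) (hamvf n Mm) x = Jmat n (cvec x) * Mm + Mz n (Mm *\<^sub>v cvec x)"
proof (rule eq_matI)
  fix i j assume "i < dim_row (Jmat n (cvec x) * Mm + Mz n (Mm *\<^sub>v cvec x))" "j < dim_col (Jmat n (cvec x) * Mm + Mz n (Mm *\<^sub>v cvec x))"
  hence i: "i < 2*n" and j: "j < 2*n" using M by auto
  let ?a = "cvec x" and ?b = "unit_vec (2*n) j :: complex vec"
  have d: "((\<lambda>t. hamvf n Mm (x + t \<cdot>\<^sub>v unit_vec (2*n) j) $ i) has_vector_derivative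
      ((Jmat n ?a *\<^sub>v (Mm *\<^sub>v ?b)) $ i + (Jmat n ?b *\<^sub>v (Mm *\<^sub>v ?a)) $ i)) (at 0)"
  proof -
    have "((\<lambda>t::real. (Jmat n ?a *\<^sub>v (Mm *\<^sub>v ?a)) $ i + t *\<^sub>R ((Jmat n ?a *\<^sub>v (Mm *\<^sub>v ?b)) $ i + (Jmat n ?b *\<^sub>v (Mm *\<^sub>v ?a)) $ i)
     + (t^2) *\<^sub>R (Jmat n ?b *\<^sub>v (Mm *\<^sub>v ?b)) $ i) has_vector_derivative
      (0 + 1 *\<^sub>R ((Jmat n ?a *\<^sub>v (Mm *\<^sub>v ?b)) $ i + (Jmat n ?b *\<^sub>v (Mm *\<^sub>v ?a)) $ i) + (2 * 0) *\<^sub>R (Jmat n ?b *\<^sub>v (Mm *\<^sub>v ?b)) $ i)) (at 0)"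
      by (auto intro!: derivative_eq_intros)
    thus ?thesis unfolding hamvf_line[OF x M j i] by (simp add: scaleR_conv_of_real)
  qed
  have "jacobian (2*n) (hamvf n Mm) x $$ (i,j) = (Jmat n ?a *\<^sub>v (Mm *\<^sub>v ?b)) $ i + (Jmat n ?b *\<^sub>v (Mm *\<^sub>v ?a)) $ i"
    using i j vector_derivative_at[OF d] by (simp add: jacobian_def)
  also have "(Jmat n ?a *\<^sub>v (Mm *\<^sub>v ?b)) = (Jmat n ?a * Mm) *\<^sub>v ?b"
    using M by (simp add: assoc_mult_mat_vec[of _ "2*n" "2*n" _ "2*n"])
  finally show "jacobian (2*n) (hamvf n Mm) x $$ (i,j) = (Jmat n (cvec x) * Mm + Mz n (Mm *\<^sub>v cvec x)) $$ (i,j)"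
    using i j M by (simp add: Mz_def)
qed (use M in \<open>auto simp: jacobian_def\<close>)

lemma sum_unit:
  assumes "p < m" "v \<in> carrier_vec m"
  shows "(\<Sum>j<m. v$j * (unit_vec m j :: 'a::comm_ring_1 vec) $ p) = v$p"
proof -
  have "(\<Sum>j<m. v$j * (unit_vec m j :: 'a vec) $ p) = (\<Sum>j<m. if j = p then v$j else 0)"
    by (rule sum.cong[OF refl]) (use assms in auto)
  also have "\<dots> = v$p" using assms by (simp add: sum.delta')
  finally show ?thesis .
qed

lemma J_lin:
  assumes v: "v \<in> carrier_vec (2*n)" and i: "i < 2*n" and k: "k < 2*n"
  shows "Jmat n v $$ (i,k) = (\<Sum>j<2*n. v$j * Jmat n (unit_vec (2*n) j :: 'a::comm_ring_1 vec) $$ (i,k))"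
proof -
  have n0: "0 < n" using i by simp
  have "(i+(k-n)) mod n < n" "(i-n+k) mod n < n" using n0 by simp_all
  hence p1: "(i+(k-n)) mod n < 2*n" "(i-n+k) mod n < 2*n" by linarith+
  have e: "(\<Sum>j<2*n. v$j * Jmat n (unit_vec (2*n) j :: 'a vec) $$ (i,k)) =
     (\<Sum>j<2*n. v$j * (if i<n then if k<n then 0 else (unit_vec (2*n) j :: 'a vec) $((i+(k-n)) mod n)
                              else if k<n then - (unit_vec (2*n) j :: 'a vec)$((i-n+k) mod n) else 0))"
    using i k by (simp add: Jentry)
  show ?thesis
  proof (cases "i < n")
    case True
    then show ?thesis unfolding e using Jentry[OF i k, of v] sum_unit[OF p1(1) v] by (cases "k<n") auto
  next
    case False
    have "(\<Sum>j<2*n. v$j * - (unit_vec (2*n) j :: 'a vec)$((i-n+k) mod n)) = - v $ ((i-n+k) mod n)"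
      using sum_unit[OF p1(2) v] by (simp add: sum_negf)
    then show ?thesis unfolding e using False Jentry[OF i k, of v] by (cases "k<n") auto
  qed
qed

lemma Mz_mult:
  assumes z: "z \<in> carrier_vec (2*n)" and v: "v \<in> carrier_vec (2*n)"
  shows "Mz n z *\<^sub>v v = Jmat n v *\<^sub>v z"
proof (rule eq_vecI)
  fix i assume "i < dim_vec (Jmat n v *\<^sub>v z)"
  hence i: "i < 2*n" by simp
  have "(Mz n z *\<^sub>v v) $ i = (\<Sum>j<2*n. (\<Sum>k<2*n. Jmat n (unit_vec (2*n) j) $$ (i,k) * z$k) * v$j)"
    using i z v by (simp add: Mz_def scalar_prod_def lessThan_atLeast0)
  also have "\<dots> = (\<Sum>j<2*n. \<Sum>k<2*n. v$j * Jmat n (unit_vec (2*n) j) $$ (i,k) * z$k)"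
    by (simp add: sum_distrib_right sum_distrib_left algebra_simps)
  also have "\<dots> = (\<Sum>k<2*n. \<Sum>j<2*n. v$j * Jmat n (unit_vec (2*n) j) $$ (i,k) * z$k)"
    by (rule sum.swap)
  also have "\<dots> = (\<Sum>k<2*n. (\<Sum>j<2*n. v$j * Jmat n (unit_vec (2*n) j) $$ (i,k)) * z$k)"
    by (simp add: sum_distrib_right)
  also have "\<dots> = (\<Sum>k<2*n. Jmat n v $$ (i,k) * z$k)"
    by (rule sum.cong[OF refl]) (use J_lin[OF v i] in auto)
  also have "\<dots> = (Jmat n v *\<^sub>v z) $ i"
    using i z by (simp add: scalar_prod_def lessThan_atLeast0)
  finally show "(Mz n z *\<^sub>v v) $ i = (Jmat n v *\<^sub>v z) $ i" .
qed simp

lemma mat_eq_vecI: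
  assumes A: "A \<in> carrier_mat m m" and B: "B \<in> carrier_mat m m"
    and h: "\<And>v. v \<in> carrier_vec m \<Longrightarrow> A *\<^sub>v v = B *\<^sub>v (v :: 'a::comm_ring_1 vec)"
  shows "A = B"
proof (rule eq_matI)
  fix i j assume "i < dim_row B" "j < dim_col B"
  hence i: "i < m" and j: "j < m" using B by auto
  have "A $$ (i,j) = (A *\<^sub>v unit_vec m j) $ i" using A i j by simp
  also have "\<dots> = (B *\<^sub>v unit_vec m j) $ i" using h[of "unit_vec m j"] by simp
  also have "\<dots> = B $$ (i,j)" using B i j by simp
  finally show "A $$ (i,j) = B $$ (i,j)" .
qed (use A B in auto)

lemma pow_comm:
  assumes C: "C \<in> carrier_mat m m" and Q: "Q \<in> carrier_mat m m" and Q': "Q' \<in> carrier_mat m m"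
    and h: "C * Q = Q' * (C :: 'a::comm_ring_1 mat)"
  shows "C * Q ^\<^sub>m k = Q' ^\<^sub>m k * C"
proof (induction k)
  case 0
  then show ?case using C Q Q' by simp
next
  case (Suc k)
  have "C * Q ^\<^sub>m Suc k = (C * Q ^\<^sub>m k) * Q" using C Q by (simp add: assoc_mult_mat[of _ m m _ m _ m])
  also have "\<dots> = Q' ^\<^sub>m k * (C * Q)" using C Q Q' Suc by (simp add: assoc_mult_mat[of _ m m _ m _ m])
  also have "\<dots> = (Q' ^\<^sub>m k * Q') * C" unfolding h using C Q Q' by (simp add: assoc_mult_mat[of _ m m _ m _ m])
  finally show ?case by simp
qed

lemma transpose_pow:
  assumes Q: "Q \<in> carrier_mat m m"
  shows "transpose_mat (Q ^\<^sub>m k) = (transpose_mat Q :: 'a::comm_ring_1 mat) ^\<^sub>m k"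
proof (induction k)
  case 0
  then show ?case using Q by simp
next
  case (Suc k)
  have "transpose_mat (Q ^\<^sub>m Suc k) = transpose_mat Q * transpose_mat (Q ^\<^sub>m k)"
    using Q by (simp add: transpose_mult[of _ m m _ m])
  also have "\<dots> = transpose_mat Q ^\<^sub>m k * transpose_mat Q"
    unfolding Suc using Q by (intro pow_comm) auto
  finally show ?case by simp
qed

definition Pol :: "nat \<Rightarrow> (nat \<Rightarrow> complex) \<Rightarrow> complex mat \<Rightarrow> nat \<Rightarrow> complex mat" where
  "Pol m \<alpha> Q r = mat m m (\<lambda>(i,j). \<Sum>k<r. \<alpha> k * (Q ^\<^sub>m k) $$ (i,j))"

lemma Pol_carrier[simp]: "Pol m \<alpha> Q r \<in> carrier_mat m m" by (simp add: Pol_def)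

lemma Pol_dims[simp]: "dim_row (Pol m \<alpha> Q r) = m" "dim_col (Pol m \<alpha> Q r) = m" by (simp_all add: Pol_def)

lemma Bmat_Pol: "Bmat n \<alpha> = Pol (2*n) \<alpha> (Amat n) n" by (simp add: Bmat_def Pol_def)

lemma Pol_transpose:
  assumes Q: "Q \<in> carrier_mat m m"
  shows "transpose_mat (Pol m \<alpha> Q r) = Pol m \<alpha> (transpose_mat Q) r"
proof (rule eq_matI)
  fix i j assume "i < dim_row (Pol m \<alpha> (transpose_mat Q) r)" "j < dim_col (Pol m \<alpha> (transpose_mat Q) r)"
  hence i: "i < m" and j: "j < m" by (auto simp: Pol_def)
  show "transpose_mat (Pol m \<alpha> Q r) $$ (i,j) = Pol m \<alpha> (transpose_mat Q) r $$ (i,j)"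
    using i j Q by (simp add: Pol_def transpose_pow[OF Q, symmetric])
qed (auto simp: Pol_def)

lemma Pol_comm:
  assumes C: "C \<in> carrier_mat m m" and Q: "Q \<in> carrier_mat m m" and Q': "Q' \<in> carrier_mat m m"
    and h: "C * Q = Q' * C"
  shows "C * Pol m \<alpha> Q r = Pol m \<alpha> Q' r * C"
proof (rule eq_matI)
  fix i j assume "i < dim_row (Pol m \<alpha> Q' r * C)" "j < dim_col (Pol m \<alpha> Q' r * C)"
  hence i: "i < m" and j: "j < m" using C by auto
  have "(C * Pol m \<alpha> Q r) $$ (i,j) = (\<Sum>l<m. C $$ (i,l) * (\<Sum>k<r. \<alpha> k * (Q ^\<^sub>m k) $$ (l,j)))"
    using i j C by (simp add: Pol_def scalar_prod_def lessThan_atLeast0)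
  also have "\<dots> = (\<Sum>k<r. \<alpha> k * (\<Sum>l<m. C $$ (i,l) * (Q ^\<^sub>m k) $$ (l,j)))"
    by (simp add: sum_distrib_left algebra_simps sum.swap[of _ "{..<m}" "{..<r}"])
  also have "\<dots> = (\<Sum>k<r. \<alpha> k * (C * Q ^\<^sub>m k) $$ (i,j))"
    using i j C Q by (simp add: scalar_prod_def lessThan_atLeast0)
  also have "\<dots> = (\<Sum>k<r. \<alpha> k * (Q' ^\<^sub>m k * C) $$ (i,j))"
    using pow_comm[OF C Q Q' h] by simp
  also have "\<dots> = (\<Sum>k<r. \<alpha> k * (\<Sum>l<m. (Q' ^\<^sub>m k) $$ (i,l) * C $$ (l,j)))"
    using i j C Q' by (simp add: scalar_prod_def lessThan_atLeast0)
  also have "\<dots> = (\<Sum>l<m. (\<Sum>k<r. \<alpha> k * (Q' ^\<^sub>m k) $$ (i,l)) * C $$ (l,j))"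
    by (simp add: sum_distrib_left sum_distrib_right algebra_simps sum.swap[of _ "{..<m}" "{..<r}"])
  also have "\<dots> = (Pol m \<alpha> Q' r * C) $$ (i,j)"
    using i j C by (simp add: Pol_def scalar_prod_def lessThan_atLeast0)
  finally show "(C * Pol m \<alpha> Q r) $$ (i,j) = (Pol m \<alpha> Q' r * C) $$ (i,j)" .
qed (use C in auto)

lemma cshift_entry: "i < n \<Longrightarrow> j < n \<Longrightarrow> (cshift n :: 'a::{zero,one} mat) $$ (i,j) = (if j = (i+1) mod n then 1 else 0)"
  by (simp add: cshift_def)

lemma cmat_cshift: "cmat (cshift n) = cshift n"
proof (rule eq_matI)
  fix i j assume "i < dim_row (cshift n :: complex mat)" "j < dim_col (cshift n :: complex mat)"
  hence ij: "i < n" "j < n" by simp_all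
  have "cmat (cshift n) $$ (i, j) = complex_of_real ((cshift n :: real mat) $$ (i,j))"
    unfolding cmat_def using ij by simp
  also have "\<dots> = cshift n $$ (i, j)" using ij by (simp add: cshift_entry)
  finally show "cmat (cshift n) $$ (i, j) = cshift n $$ (i, j)" .
qed (simp_all add: cmat_def)

lemma cmat_zero: "cmat (0\<^sub>m n n) = 0\<^sub>m n n"
  by (rule eq_matI) (simp_all add: cmat_def)

lemma cmat_Amat: "cmat (Amat n) = Amat n"
  unfolding Amat_def
  by (subst cmat_four[where n=n]) (simp_all only: cshift_carrier zero_carrier_mat cmat_cshift cmat_zero)


lemma JB_comm:
  assumes n: "0 < n"
  shows "Jmat n w * Bmat n \<alpha> = transpose_mat (Bmat n \<alpha>) * Jmat n w"
  unfolding Bmat_Pol Pol_transpose[OF Amat_carrier]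
  by (rule Pol_comm) (auto simp: E1[OF n])

lemma Mz_AT:
  assumes n: "0 < n" and z: "z \<in> carrier_vec (2*n)"
  shows "Mz n z * transpose_mat (Amat n) = transpose_mat (Amat n) * Mz n z"
proof (rule mat_eq_vecI[of _ "2*n"])
  fix v :: "complex vec" assume v: "v \<in> carrier_vec (2*n)"
  have AT: "transpose_mat (Amat n) \<in> carrier_mat (2*n) (2*n)" by simp
  have "(Mz n z * transpose_mat (Amat n)) *\<^sub>v v = Mz n z *\<^sub>v (transpose_mat (Amat n) *\<^sub>v v)"
    using v AT by (simp add: assoc_mult_mat_vec[of _ "2*n" "2*n" _ "2*n"])
  also have "\<dots> = Jmat n (transpose_mat (Amat n) *\<^sub>v v) *\<^sub>v z"
    by (rule Mz_mult[OF z mult_mat_vec_carrier[OF AT v]])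
  also have "\<dots> = (transpose_mat (Amat n) * Jmat n v) *\<^sub>v z"
    using E3[OF n v] by simp
  also have "\<dots> = transpose_mat (Amat n) *\<^sub>v (Jmat n v *\<^sub>v z)"
    using z AT by (simp add: assoc_mult_mat_vec[of _ "2*n" "2*n" _ "2*n"])
  also have "\<dots> = transpose_mat (Amat n) *\<^sub>v (Mz n z *\<^sub>v v)"
    using v z by (simp add: Mz_mult)
  also have "\<dots> = (transpose_mat (Amat n) * Mz n z) *\<^sub>v v"
    using v AT by (simp add: assoc_mult_mat_vec[of _ "2*n" "2*n" _ "2*n"])
  finally show "(Mz n z * transpose_mat (Amat n)) *\<^sub>v v = (transpose_mat (Amat n) * Mz n z) *\<^sub>v v" .
qed (auto intro!: mult_carrier_mat)

lemma Mz_B: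
  assumes n: "0 < n" and z: "z \<in> carrier_vec (2*n)"
  shows "Mz n z * transpose_mat (Bmat n \<alpha>) = transpose_mat (Bmat n \<alpha>) * Mz n z"
  unfolding Bmat_Pol Pol_transpose[OF Amat_carrier]
  by (rule Pol_comm) (auto simp: Mz_AT[OF n z])

lemma Mz_Bz:
  assumes n: "0 < n" and z: "z \<in> carrier_vec (2*n)"
  shows "Mz n (Bmat n \<alpha> *\<^sub>v z) = transpose_mat (Bmat n \<alpha>) * Mz n z"
proof (rule mat_eq_vecI[of _ "2*n"])
  fix v :: "complex vec" assume v: "v \<in> carrier_vec (2*n)"
  have B: "Bmat n \<alpha> \<in> carrier_mat (2*n) (2*n)" by (simp add: Bmat_def)
  hence BT: "transpose_mat (Bmat n \<alpha>) \<in> carrier_mat (2*n) (2*n)" by simp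
  have "Mz n (Bmat n \<alpha> *\<^sub>v z) *\<^sub>v v = Jmat n v *\<^sub>v (Bmat n \<alpha> *\<^sub>v z)"
    using v z B by (simp add: Mz_mult)
  also have "\<dots> = (Jmat n v * Bmat n \<alpha>) *\<^sub>v z"
    using z B by (simp add: assoc_mult_mat_vec[of _ "2*n" "2*n" _ "2*n"])
  also have "\<dots> = (transpose_mat (Bmat n \<alpha>) * Jmat n v) *\<^sub>v z"
    using JB_comm[OF n] by simp
  also have "\<dots> = transpose_mat (Bmat n \<alpha>) *\<^sub>v (Jmat n v *\<^sub>v z)"
    using z BT by (simp add: assoc_mult_mat_vec[of _ "2*n" "2*n" _ "2*n"])
  also have "\<dots> = transpose_mat (Bmat n \<alpha>) *\<^sub>v (Mz n z *\<^sub>v v)"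
    using v z by (simp add: Mz_mult)
  also have "\<dots> = (transpose_mat (Bmat n \<alpha>) * Mz n z) *\<^sub>v v"
    using v BT by (simp add: assoc_mult_mat_vec[of _ "2*n" "2*n" _ "2*n"])
  finally show "Mz n (Bmat n \<alpha> *\<^sub>v z) *\<^sub>v v = (transpose_mat (Bmat n \<alpha>) * Mz n z) *\<^sub>v v" .
qed (auto intro!: mult_carrier_mat simp: Bmat_def)

lemma H_B:
  assumes adm: "admissible n HH"
  shows "cmat HH * transpose_mat (Bmat n \<alpha>) = Bmat n \<alpha> * cmat HH"
proof -
  have HH: "HH \<in> carrier_mat (2*n) (2*n)" and e: "Amat n * HH = HH * transpose_mat (Amat n)"
    using adm by (auto simp: admissible_def)
  have "cmat (Amat n * HH) = cmat (HH * transpose_mat (Amat n))" using e by simp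
  hence "Amat n * cmat HH = cmat HH * transpose_mat (Amat n)"
    using HH by (simp add: cmat_mult[of _ "2*n" "2*n" _ "2*n"] cmat_transpose cmat_Amat)
  hence h: "cmat HH * transpose_mat (Amat n) = Amat n * cmat HH" by simp
  show ?thesis
    unfolding Bmat_Pol Pol_transpose[OF Amat_carrier]
    by (rule Pol_comm) (use HH h in \<open>auto simp: cmat_carrier\<close>)
qed

theorem mainTheorem17:
  fixes n :: nat and HH :: "real mat" and \<alpha> :: "nat \<Rightarrow> complex" and x :: "real vec"
  assumes n2: "n \<ge> 2"
    and adm: "admissible n HH"
    and B2: "Bmat n \<alpha> * Bmat n \<alpha> = 1\<^sub>m (2*n)"
    and x: "x \<in> carrier_vec (2*n)"
  defines "Hc \<equiv> cmat HH"
    and "KK \<equiv> Bmat n \<alpha> * cmat HH"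
    and "f \<equiv> hamvf n (cmat HH)"
    and "g \<equiv> hamvf n (Bmat n \<alpha> * cmat HH)"
    and "JJ \<equiv> Jmat n (cvec x)"
  shows "jacobian (2*n) g x *\<^sub>v g x = jacobian (2*n) f x *\<^sub>v f x \<and>
         jacobian (2*n) g x * jacobian (2*n) g x = jacobian (2*n) f x * jacobian (2*n) f x \<and>
         JJ * Hc * (JJ * KK) = JJ * KK * (JJ * Hc) \<and>
         JJ * Hc * (JJ * Hc) = JJ * KK * (JJ * KK) \<and>
         Hc * JJ * (Hc * JJ) = KK * JJ * (KK * JJ)"
proof -
  have n0: "0 < n" using n2 by simp
  define N where "N = 2*n"
  define B where "B = Bmat n \<alpha>"
  define Bt where "Bt = transpose_mat B"
  define cx where "cx = cvec x"
  define z where "z = Hc *\<^sub>v cx"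
  define F where "F = JJ * Hc + Mz n z"
  have HH: "HH \<in> carrier_mat N N" using adm by (simp add: admissible_def N_def)
  have cH: "Hc \<in> carrier_mat N N" using HH by (simp add: Hc_def cmat_carrier)
  have cB: "B \<in> carrier_mat N N" by (simp add: B_def Bmat_def N_def)
  have cBt: "Bt \<in> carrier_mat N N" using cB by (simp add: Bt_def)
  have cJ: "JJ \<in> carrier_mat N N" by (simp add: JJ_def N_def)
  have cx: "cx \<in> carrier_vec N" using x by (simp add: cx_def N_def)
  have cz: "z \<in> carrier_vec N" using cH cx by (simp add: z_def)
  have cM: "Mz n z \<in> carrier_mat N N" by (simp add: N_def)
  have cF: "F \<in> carrier_mat N N" using cJ cH cM by (simp add: F_def)
  have mc: "\<And>A C. A \<in> carrier_mat N N \<Longrightarrow> C \<in> carrier_mat N N \<Longrightarrow> A * C \<in> carrier_mat N N"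
    by (rule mult_carrier_mat)
  have as: "\<And>A C D. A \<in> carrier_mat N N \<Longrightarrow> C \<in> carrier_mat N N \<Longrightarrow> D \<in> carrier_mat N N \<Longrightarrow> A * C * D = A * (C * D)"
    by (rule assoc_mult_mat)
  have asv: "\<And>A C v. A \<in> carrier_mat N N \<Longrightarrow> C \<in> carrier_mat N N \<Longrightarrow> v \<in> carrier_vec N \<Longrightarrow> (A * C) *\<^sub>v v = A *\<^sub>v (C *\<^sub>v v)"
    by (rule assoc_mult_mat_vec)
  have BtBt: "Bt * Bt = 1\<^sub>m N"
  proof -
    have "transpose_mat (B * B) = Bt * Bt" using cB by (simp add: Bt_def transpose_mult[of _ N N _ N])
    thus ?thesis using B2 by (simp add: B_def N_def)
  qed
  have BB: "B * B = 1\<^sub>m N" using B2 by (simp add: B_def N_def)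
  have JB: "JJ * B = Bt * JJ" unfolding JJ_def B_def Bt_def by (rule JB_comm[OF n0])
  have HB: "Hc * Bt = B * Hc" unfolding Hc_def B_def Bt_def by (rule H_B[OF adm])
  have MB: "Mz n z * Bt = Bt * Mz n z" unfolding B_def Bt_def using cz by (intro Mz_B[OF n0]) (simp add: N_def)
  have MBz: "Mz n (B *\<^sub>v z) = Bt * Mz n z" unfolding B_def Bt_def using cz by (intro Mz_Bz[OF n0]) (simp add: N_def)
  have KK: "KK = B * Hc" by (simp add: KK_def B_def Hc_def)
  have JBH: "JJ * (B * Hc) = Bt * (JJ * Hc)"
  proof -
    have "JJ * (B * Hc) = JJ * B * Hc" using as[OF cJ cB cH] by simp
    also have "\<dots> = Bt * JJ * Hc" by (simp add: JB)
    also have "\<dots> = Bt * (JJ * Hc)" using as[OF cBt cJ cH] .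
    finally show ?thesis .
  qed
  have JHB: "JJ * Hc * Bt = Bt * (JJ * Hc)"
  proof -
    have "JJ * Hc * Bt = JJ * (Hc * Bt)" using as[OF cJ cH cBt] .
    also have "\<dots> = JJ * (B * Hc)" by (simp add: HB)
    finally show ?thesis using JBH by simp
  qed
  have fx: "f x = JJ *\<^sub>v z" by (simp add: f_def hamvf_def JJ_def z_def cx_def Hc_def)
  have gx: "g x = Bt *\<^sub>v f x"
  proof -
    have "g x = JJ *\<^sub>v ((B * Hc) *\<^sub>v cx)" by (simp add: g_def hamvf_def JJ_def cx_def B_def Hc_def)
    also have "\<dots> = (JJ * B) *\<^sub>v z" using cB cH cJ cx by (simp add: asv z_def)
    also have "\<dots> = Bt *\<^sub>v f x" unfolding JB fx using cBt cJ cz by (simp add: asv)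
    finally show ?thesis .
  qed
  have jf: "jacobian (2*n) f x = F"
    unfolding f_def F_def z_def cx_def Hc_def JJ_def
    by (rule jacobian_hamvf[OF x]) (use HH in \<open>simp add: cmat_carrier N_def\<close>)
  have jg: "jacobian (2*n) g x = Bt * F"
  proof -
    have cBH: "Bmat n \<alpha> * cmat HH \<in> carrier_mat (2*n) (2*n)"
      using mc[OF cB cH] by (simp add: B_def Hc_def N_def)
    have "jacobian (2*n) g x = JJ * (B * Hc) + Mz n ((B * Hc) *\<^sub>v cx)"
      unfolding g_def cx_def JJ_def B_def Hc_def
      by (rule jacobian_hamvf[OF x cBH])
    also have "\<dots> = Bt * (JJ * Hc) + Bt * Mz n z"
      using cB cH cJ cBt cx by (simp add: JBH asv z_def MBz[unfolded z_def])
    also have "\<dots> = Bt * F" unfolding F_def using mult_add_distrib_mat[OF cBt mc[OF cJ cH] cM] by simp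
    finally show ?thesis .
  qed
  have FB: "F * Bt = Bt * F"
  proof -
    have "F * Bt = JJ * Hc * Bt + Mz n z * Bt" unfolding F_def using add_mult_distrib_mat[OF mc[OF cJ cH] cM cBt] by simp
    also have "\<dots> = Bt * (JJ * Hc) + Bt * Mz n z"
      by (simp add: JHB MB)
    also have "\<dots> = Bt * F" unfolding F_def using mult_add_distrib_mat[OF cBt mc[OF cJ cH] cM] by simp
    finally show ?thesis .
  qed
  have c1: "jacobian (2*n) g x *\<^sub>v g x = jacobian (2*n) f x *\<^sub>v f x"
  proof -
    have cf: "f x \<in> carrier_vec N" using cJ cz by (simp add: fx)
    have "jacobian (2*n) g x *\<^sub>v g x = (Bt * F) *\<^sub>v (Bt *\<^sub>v f x)" by (simp add: jg gx)
    also have "\<dots> = ((Bt * F) * Bt) *\<^sub>v f x" using cBt cF cf mc by (simp add: asv)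
    also have "(Bt * F) * Bt = (Bt * Bt) * F" using cBt cF by (simp add: as FB)
    also have "\<dots> = F" using cF by (simp add: BtBt N_def)
    finally show ?thesis by (simp add: jf)
  qed
  have c2: "jacobian (2*n) g x * jacobian (2*n) g x = jacobian (2*n) f x * jacobian (2*n) f x"
  proof -
    have "(Bt * F) * (Bt * F) = (Bt * (F * Bt)) * F" using cBt cF mc by (simp add: as)
    also have "\<dots> = (Bt * Bt) * F * F" using cBt cF mc by (simp add: as FB)
    also have "\<dots> = F * F" using cF by (simp add: BtBt N_def)
    finally show ?thesis by (simp add: jf jg)
  qed
  define Y where "Y = JJ * Hc"
  have cY: "Y \<in> carrier_mat N N" using cJ cH by (simp add: Y_def)
  have JK: "JJ * KK = Bt * Y" unfolding KK Y_def by (rule JBH)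
  have YB: "Y * Bt = Bt * Y" unfolding Y_def by (rule JHB)
  have c3: "JJ * Hc * (JJ * KK) = JJ * KK * (JJ * Hc)"
  proof -
    have "Y * (Bt * Y) = Y * Bt * Y" using as[OF cY cBt cY] by simp
    also have "\<dots> = Bt * Y * Y" by (simp add: YB)
    finally show ?thesis unfolding JK Y_def[symmetric] .
  qed
  have c4: "JJ * Hc * (JJ * Hc) = JJ * KK * (JJ * KK)"
  proof -
    have "(Bt * Y) * (Bt * Y) = Bt * Y * Bt * Y" using as[OF mc[OF cBt cY] cBt cY] by simp
    also have "Bt * Y * Bt = Bt * (Y * Bt)" using as[OF cBt cY cBt] .
    also have "\<dots> = Bt * (Bt * Y)" by (simp add: YB)
    also have "\<dots> = Bt * Bt * Y" using as[OF cBt cBt cY] by simp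
    also have "\<dots> = Y" using cY by (simp add: BtBt N_def)
    finally show ?thesis unfolding JK Y_def[symmetric] by simp
  qed
  define Z where "Z = Hc * JJ"
  have cZ: "Z \<in> carrier_mat N N" using cJ cH by (simp add: Z_def)
  have KJ: "KK * JJ = B * Z" unfolding KK Z_def using cJ cB cH by (simp add: as)
  have ZB: "Z * B = B * Z"
  proof -
    have "Z * B = Hc * (JJ * B)" unfolding Z_def using as[OF cH cJ cB] .
    also have "\<dots> = Hc * (Bt * JJ)" by (simp add: JB)
    also have "\<dots> = Hc * Bt * JJ" using as[OF cH cBt cJ] by simp
    also have "\<dots> = B * Hc * JJ" by (simp add: HB)
    also have "\<dots> = B * Z" unfolding Z_def using as[OF cB cH cJ] .
    finally show ?thesis .
  qed
  have c5: "Hc * JJ * (Hc * JJ) = KK * JJ * (KK * JJ)"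
  proof -
    have "(B * Z) * (B * Z) = B * Z * B * Z" using as[OF mc[OF cB cZ] cB cZ] by simp
    also have "B * Z * B = B * (Z * B)" using as[OF cB cZ cB] .
    also have "\<dots> = B * (B * Z)" by (simp add: ZB)
    also have "\<dots> = B * B * Z" using as[OF cB cB cZ] by simp
    also have "\<dots> = Z" using cZ by (simp add: BB N_def)
    finally show ?thesis unfolding KJ Z_def[symmetric] by simp
  qed
  show ?thesis using c1 c2 c3 c4 c5 by blast
qed

end
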